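(* Let $\alpha\in(0,1)$ be irrational and let $B_1,B_2,\dots$ be the Minkowski chain of $\alpha$ (case $n=1$). Then $|\det B_k|=1$ for all $k\ge1$.
   Context: Minkowski chain: Let $n\ge1$, $\ell=n+1$, $(\alpha_1,\dots,\alpha_n)\in\mathbb{R}^n$ with $\alpha_1,\dots,\alpha_n,1$ linearly independent over $\mathbb{Q}$. For $r=(r_1,\dots,r_\ell)\in\mathbb{Z}^\ell$ put $\xi(r)=r_1\alpha_1+\cdots+r_n\alpha_n+r_\ell$. For a real matrix or vector, $\|\cdot\|_\infty$ is the maximum absolute value of its entries. For $m\in\mathbb{Z}^+$, $A_m$ is the nonsingular integral $\ell\times\ell$ matrix with rows $w_1,\dots,w_\ell$ chosen successively: $w_i$ is the vector $w\in\mathbb{Z}^\ell$ with $\|w\|_\infty\le m$, linearly independent of $w_1,\dots,w_{i-1}$, minimizing $|\xi(w)|$, normalized so that its first nonzero entry is positive (unique by the linear independence hypothesis). The Minkowski chain $B_1,B_2,\dots$ is the sequence of distinct matrices among $A_1,A_2,A_3,\dots$ in order of appearance ($B_1=A_1$). Here $n=1$ and $\alpha_1=\alpha$. *)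

theory Defs
  imports "HOL-Analysis.Analysis" "HOL-Library.Infinite_Set"
begin

text \<open>Minkowski chain in the case n = 1, l = 2. Integer vectors are elements of int^2,
  integral 2x2 matrices are elements of int^2^2 (rows w_1, w_2).\<close>

definition xi :: "real \<Rightarrow> int^2 \<Rightarrow> real" where
  "xi \<alpha> r = of_int (r$1) * \<alpha> + of_int (r$2)"

definition norm_inf :: "int^2 \<Rightarrow> int" where
  "norm_inf r = max \<bar>r$1\<bar> \<bar>r$2\<bar>"

text \<open>Embedding into real^2, used to express linear independence (over Q, equivalently over R).\<close>
definition emb :: "int^2 \<Rightarrow> real^2" where
  "emb r = (\<chi> i. real_of_int (r$i))"

definition normalized :: "int^2 \<Rightarrow> bool" where
  "normalized r \<longleftrightarrow> r$1 > 0 \<or> (r$1 = 0 \<and> r$2 > 0)"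

definition admissible :: "nat \<Rightarrow> (int^2) set \<Rightarrow> int^2 \<Rightarrow> bool" where
  "admissible m prev w \<longleftrightarrow> norm_inf w \<le> int m \<and> emb w \<notin> emb ` prev
      \<and> independent (insert (emb w) (emb ` prev))"

definition choose_row :: "real \<Rightarrow> nat \<Rightarrow> (int^2) set \<Rightarrow> int^2" where
  "choose_row \<alpha> m prev = (THE w. admissible m prev w \<and> normalized w
      \<and> (\<forall>v. admissible m prev v \<longrightarrow> \<bar>xi \<alpha> w\<bar> \<le> \<bar>xi \<alpha> v\<bar>))"

definition row1 :: "real \<Rightarrow> nat \<Rightarrow> int^2" where
  "row1 \<alpha> m = choose_row \<alpha> m {}"

definition row2 :: "real \<Rightarrow> nat \<Rightarrow> int^2" where
  "row2 \<alpha> m = choose_row \<alpha> m {row1 \<alpha> m}"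

definition A_mat :: "real \<Rightarrow> nat \<Rightarrow> int^2^2" where
  "A_mat \<alpha> m = (\<chi> i. if i = 1 then row1 \<alpha> m else row2 \<alpha> m)"

definition chain_indices :: "real \<Rightarrow> nat set" where
  "chain_indices \<alpha> = {m. 1 \<le> m \<and> (\<forall>j. 1 \<le> j \<and> j < m \<longrightarrow> A_mat \<alpha> j \<noteq> A_mat \<alpha> m)}"

definition minkowski_chain :: "real \<Rightarrow> nat \<Rightarrow> int^2^2" where
  "minkowski_chain \<alpha> k = A_mat \<alpha> (enumerate (chain_indices \<alpha>) (k - 1))"

end

theory Submission imports Defs begin

lemma vec2_eq: "(v::'a^2) = w \<longleftrightarrow> v$1 = w$1 \<and> v$2 = w$2"
  by (simp add: vec_eq_iff forall_2)

definition mk :: "int \<Rightarrow> int \<Rightarrow> int^2" where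
  "mk p q = (\<chi> i. if i = 1 then p else q)"

lemma mk_simps[simp]: "mk p q $ 1 = p" "mk p q $ 2 = q"
  by (simp_all add: mk_def)

lemma irr_eq:
  assumes "\<alpha> \<notin> \<rat>" "of_int a * \<alpha> + of_int b = of_int c * \<alpha> + of_int d"
  shows "a = c \<and> b = d"
proof (cases "a = c")
  case True
  then show ?thesis using assms(2) by simp
next
  case False
  then have "\<alpha> = of_int (d - b) / of_int (a - c)"
    using assms(2) by (simp add: field_simps)
  then have "\<alpha> \<in> \<rat>" by simp
  then show ?thesis using assms(1) by simp
qed

lemma xi_eq: "\<alpha> \<notin> \<rat> \<Longrightarrow> xi \<alpha> v = xi \<alpha> w \<Longrightarrow> v = w"
  unfolding xi_def vec2_eq using irr_eq by blast

lemma xi_neg[simp]: "xi \<alpha> (-v) = - xi \<alpha> v"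
  by (simp add: xi_def)

lemma xi_nz: "\<alpha> \<notin> \<rat> \<Longrightarrow> v \<noteq> 0 \<Longrightarrow> xi \<alpha> v \<noteq> 0"
  using xi_eq[of \<alpha> v 0] by (auto simp: xi_def)

lemma emb_nth[simp]: "emb w $ i = real_of_int (w $ i)"
  by (simp add: emb_def)

lemma emb_eq0: "emb w = 0 \<longleftrightarrow> w = 0"
  by (simp add: vec2_eq)

lemma adm0: "admissible m {} w \<longleftrightarrow> norm_inf w \<le> int m \<and> w \<noteq> 0"
  unfolding admissible_def by (simp add: emb_eq0)

lemma par_iff:
  fixes a b p q :: int
  assumes "\<not> (p = 0 \<and> q = 0)"
  shows "(\<exists>k::real. of_int a = k * of_int p \<and> of_int b = k * of_int q) \<longleftrightarrow> a * q - b * p = 0"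
proof
  assume "\<exists>k::real. of_int a = k * of_int p \<and> of_int b = k * of_int q"
  then obtain k :: real where "of_int a = k * of_int p" "of_int b = k * of_int q" by blast
  then have "real_of_int (a * q - b * p) = 0" by (simp add: algebra_simps)
  then show "a * q - b * p = 0" by linarith
next
  assume h: "a * q - b * p = 0"
  show "\<exists>k::real. of_int a = k * of_int p \<and> of_int b = k * of_int q"
  proof (cases "p = 0")
    case True
    then have "q \<noteq> 0" using assms by simp
    with h True have "a = 0" by simp
    show ?thesis
      by (rule exI[of _ "of_int b / of_int q"]) (use True \<open>q \<noteq> 0\<close> \<open>a = 0\<close> in simp)
  next
    case False
    have "real_of_int a * of_int q = of_int b * of_int p"
      using h by (metis eq_iff_diff_eq_0 of_int_mult)
    then show ?thesis
      by (intro exI[of _ "of_int a / of_int p"]) (use False in \<open>simp add: field_simps\<close>)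
  qed
qed

lemma adm1:
  assumes "w1 \<noteq> 0"
  shows "admissible m {w1} w \<longleftrightarrow> norm_inf w \<le> int m \<and> w$1 * w1$2 - w$2 * w1$1 \<noteq> 0"
proof -
  have nz: "emb w1 \<noteq> 0" using assms emb_eq0 by blast
  have sp: "emb w \<in> span {emb w1} \<longleftrightarrow> w$1 * w1$2 - w$2 * w1$1 = 0"
  proof -
    have "emb w \<in> span {emb w1} \<longleftrightarrow> (\<exists>k. emb w = k *\<^sub>R emb w1)"
      by (auto simp: span_singleton)
    also have "\<dots> \<longleftrightarrow> (\<exists>k::real. of_int (w$1) = k * of_int (w1$1) \<and> of_int (w$2) = k * of_int (w1$2))"
      by (simp add: vec2_eq)
    also have "\<dots> \<longleftrightarrow> w$1 * w1$2 - w$2 * w1$1 = 0"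
      by (rule par_iff) (use assms in \<open>simp add: vec2_eq\<close>)
    finally show ?thesis .
  qed
  have "emb w1 \<in> span {emb w1}" by (simp add: span_base)
  then have "(emb w \<noteq> emb w1 \<and> independent (insert (emb w) {emb w1})) \<longleftrightarrow> emb w \<notin> span {emb w1}"
    using nz by (auto simp: independent_insert)
  then show ?thesis unfolding admissible_def using sp by auto
qed

lemma fin_box: "finite {w::int^2. norm_inf w \<le> M}"
proof -
  have "{w::int^2. norm_inf w \<le> M} \<subseteq> (\<lambda>p. mk (fst p) (snd p)) ` ({-M..M} \<times> {-M..M})"
  proof
    fix w :: "int^2" assume "w \<in> {w. norm_inf w \<le> M}"
    then have "w$1 \<in> {-M..M}" "w$2 \<in> {-M..M}" by (auto simp: norm_inf_def)
    moreover have "w = mk (w$1) (w$2)" by (simp add: vec2_eq)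
    ultimately show "w \<in> (\<lambda>p. mk (fst p) (snd p)) ` ({-M..M} \<times> {-M..M})"
      by (metis (no_types, lifting) SigmaI fst_conv image_eqI snd_conv)
  qed
  then show ?thesis by (rule finite_subset) auto
qed

lemma norm_inf_neg[simp]: "norm_inf (-w) = norm_inf w"
  by (simp add: norm_inf_def)

lemma choose_row_spec:
  assumes irr: "\<alpha> \<notin> \<rat>" and fin: "finite {w. admissible m prev w}"
    and ne: "admissible m prev w0"
    and neg: "\<And>w. admissible m prev w \<Longrightarrow> admissible m prev (-w)"
    and nz: "\<And>w. admissible m prev w \<Longrightarrow> w \<noteq> 0"
  shows "admissible m prev (choose_row \<alpha> m prev) \<and> normalized (choose_row \<alpha> m prev)
    \<and> (\<forall>v. admissible m prev v \<longrightarrow> \<bar>xi \<alpha> (choose_row \<alpha> m prev)\<bar> \<le> \<bar>xi \<alpha> v\<bar>)"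
proof -
  define S where "S = {w. admissible m prev w}"
  define Q where "Q = (\<lambda>w. admissible m prev w \<and> normalized w
      \<and> (\<forall>v. admissible m prev v \<longrightarrow> \<bar>xi \<alpha> w\<bar> \<le> \<bar>xi \<alpha> v\<bar>))"
  define M where "M = Min ((\<lambda>w. \<bar>xi \<alpha> w\<bar>) ` S)"
  have "S \<noteq> {}" using ne S_def by auto
  then have "M \<in> (\<lambda>w. \<bar>xi \<alpha> w\<bar>) ` S" unfolding M_def using fin S_def by (intro Min_in) auto
  then obtain w where w: "w \<in> S" "\<bar>xi \<alpha> w\<bar> = M" by auto
  have wmin: "\<forall>v. admissible m prev v \<longrightarrow> \<bar>xi \<alpha> w\<bar> \<le> \<bar>xi \<alpha> v\<bar>"
    using w fin unfolding M_def S_def by auto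
  have "w \<noteq> 0" using nz w S_def by auto
  then have "normalized w \<or> normalized (-w)"
    by (auto simp: normalized_def vec2_eq)
  then have ex: "\<exists>u. Q u"
  proof
    assume "normalized w" then show ?thesis using w wmin S_def Q_def by blast
  next
    assume "normalized (-w)" then have "Q (-w)" using w wmin neg S_def Q_def by auto
    then show ?thesis by blast
  qed
  have uniq: "u = v" if "Q u" "Q v" for u v
  proof -
    have "\<bar>xi \<alpha> u\<bar> = \<bar>xi \<alpha> v\<bar>" using that Q_def by (meson order_antisym)
    then have "xi \<alpha> u = xi \<alpha> v \<or> xi \<alpha> u = xi \<alpha> (-v)" by (auto simp: abs_eq_iff)
    then have "u = v \<or> u = -v" using xi_eq irr by blast
    moreover have "\<not> (normalized v \<and> normalized (-v))" by (auto simp: normalized_def)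
    ultimately show ?thesis using that Q_def by auto
  qed
  have "Q (choose_row \<alpha> m prev)"
    unfolding choose_row_def Q_def[symmetric] using ex uniq by (metis theI)
  then show ?thesis unfolding Q_def .
qed

lemma int_of_div:
  fixes x D :: int
  assumes "D \<noteq> 0" "real_of_int x / real_of_int D \<in> \<int>"
  obtains k where "x = D * k"
proof -
  from assms(2) obtain k where "real_of_int x / real_of_int D = of_int k" by (auto elim: Ints_cases)
  then have "real_of_int x = of_int D * of_int k" using assms(1) by (simp add: field_simps)
  then have "x = D * k" by (metis of_int_eq_iff of_int_mult)
  then show ?thesis using that by blast
qed

lemma core:
  fixes a b c e m :: int and \<alpha> :: real
  assumes irr: "\<alpha> \<notin> \<rat>"
    and ab: "\<bar>a\<bar> \<le> m" "\<bar>b\<bar> \<le> m" "\<not> (a = 0 \<and> b = 0)"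
    and ce: "\<bar>c\<bar> \<le> m" "\<bar>e\<bar> \<le> m"
    and D: "a * e - b * c \<noteq> 0"
    and min1: "\<And>p q. \<bar>p\<bar> \<le> m \<Longrightarrow> \<bar>q\<bar> \<le> m \<Longrightarrow> \<not> (p = 0 \<and> q = 0) \<Longrightarrow>
        \<bar>of_int a * \<alpha> + of_int b\<bar> \<le> \<bar>of_int p * \<alpha> + of_int q\<bar>"
    and min2: "\<And>p q. \<bar>p\<bar> \<le> m \<Longrightarrow> \<bar>q\<bar> \<le> m \<Longrightarrow> p * b - q * a \<noteq> 0 \<Longrightarrow>
        \<bar>of_int c * \<alpha> + of_int e\<bar> \<le> \<bar>of_int p * \<alpha> + of_int q\<bar>"
  shows "\<bar>a * e - b * c\<bar> = 1"
proof -
  define Di where "Di = a * e - b * c"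
  define Dr where "Dr = real_of_int Di"
  have Di0: "Di \<noteq> 0" using D Di_def by simp
  have Dr0: "Dr \<noteq> 0" using Di0 by (simp add: Dr_def)
  define x1 where "x1 = of_int a * \<alpha> + of_int b"
  define x2 where "x2 = of_int c * \<alpha> + of_int e"
  have x1nz: "x1 \<noteq> 0"
  proof
    assume "x1 = 0"
    then have "of_int a * \<alpha> + of_int b = of_int 0 * \<alpha> + of_int 0" by (simp add: x1_def)
    then show False using irr_eq[OF irr] ab(3) by blast
  qed
  have le12: "\<bar>x1\<bar> \<le> \<bar>x2\<bar>"
    proof -
    have "\<not> (c = 0 \<and> e = 0)" using D by auto
    then show ?thesis unfolding x1_def x2_def using min1[OF ce] by blast
  qed
  have ne12: "\<bar>x1\<bar> \<noteq> \<bar>x2\<bar>"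
  proof
    assume "\<bar>x1\<bar> = \<bar>x2\<bar>"
    then have "x1 = x2 \<or> x1 = of_int (-c) * \<alpha> + of_int (-e)" by (auto simp: abs_eq_iff x2_def)
    then have "(a = c \<and> b = e) \<or> (a = -c \<and> b = -e)"
      unfolding x1_def x2_def using irr_eq[OF irr] by blast
    then show False using D by auto
  qed
  have lt: "\<bar>x1\<bar> < \<bar>x2\<bar>" using le12 ne12 by simp
  have claim: "(real_of_int p * of_int e - of_int q * of_int c) / Dr \<in> \<int>
      \<and> (real_of_int a * of_int q - of_int b * of_int p) / Dr \<in> \<int>" for p q :: int
  proof (rule ccontr)
    assume nint: "\<not> ?thesis"
    define s where "s = (real_of_int p * of_int e - of_int q * of_int c) / Dr"
    define t where "t = (real_of_int a * of_int q - of_int b * of_int p) / Dr"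
    define S where "S = \<lfloor>s + 1/2\<rfloor>"
    define T where "T = \<lfloor>t + 1/2\<rfloor>"
    define s' where "s' = s - of_int S"
    define t' where "t' = t - of_int T"
    have hs: "\<bar>s'\<bar> \<le> 1/2" unfolding s'_def S_def
      using of_int_floor_le[of "s+1/2"] real_of_int_floor_add_one_gt[of "s+1/2"] by linarith
    have ht: "\<bar>t'\<bar> \<le> 1/2" unfolding t'_def T_def
      using of_int_floor_le[of "t+1/2"] real_of_int_floor_add_one_gt[of "t+1/2"] by linarith
    have "(s * of_int a + t * of_int c) * Dr = (real_of_int p * of_int e - of_int q * of_int c) * of_int a
        + (real_of_int a * of_int q - of_int b * of_int p) * of_int c"
      unfolding s_def t_def using Dr0 by (simp add: field_simps)
    also have "\<dots> = real_of_int p * Dr" by (simp add: Dr_def Di_def algebra_simps)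
    finally have u1: "real_of_int p = s * of_int a + t * of_int c" using Dr0 by simp
    have "(s * of_int b + t * of_int e) * Dr = (real_of_int p * of_int e - of_int q * of_int c) * of_int b
        + (real_of_int a * of_int q - of_int b * of_int p) * of_int e"
      unfolding s_def t_def using Dr0 by (simp add: field_simps)
    also have "\<dots> = real_of_int q * Dr" by (simp add: Dr_def Di_def algebra_simps)
    finally have u2: "real_of_int q = s * of_int b + t * of_int e" using Dr0 by simp
    define v1 where "v1 = p - S * a - T * c"
    define v2 where "v2 = q - S * b - T * e"
    have v1r: "real_of_int v1 = s' * of_int a + t' * of_int c"
      unfolding v1_def s'_def t'_def using u1 by (simp add: algebra_simps)
    have v2r: "real_of_int v2 = s' * of_int b + t' * of_int e"
      unfolding v2_def s'_def t'_def using u2 by (simp add: algebra_simps)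
    have bnd: "\<bar>s' * of_int x + t' * of_int y\<bar> \<le> of_int m" if "\<bar>x\<bar> \<le> m" "\<bar>y\<bar> \<le> m" for x y
    proof -
      have "\<bar>s' * of_int x + t' * of_int y\<bar> \<le> \<bar>s'\<bar> * \<bar>of_int x\<bar> + \<bar>t'\<bar> * \<bar>of_int y\<bar>"
        by (metis abs_mult abs_triangle_ineq)
      also have "\<dots> \<le> 1/2 * of_int m + 1/2 * of_int m"
        apply (intro add_mono mult_mono)
        using hs ht that by (auto simp flip: of_int_abs)
      finally show ?thesis by simp
    qed
    have v1b: "\<bar>v1\<bar> \<le> m"
      using bnd[OF ab(1) ce(1)] v1r by (metis of_int_abs of_int_le_iff)
    have v2b: "\<bar>v2\<bar> \<le> m"
      using bnd[OF ab(2) ce(2)] v2r by (metis of_int_abs of_int_le_iff)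
    have xv: "of_int v1 * \<alpha> + of_int v2 = s' * x1 + t' * x2"
      unfolding v1r v2r x1_def x2_def by (simp add: algebra_simps)
    show False
    proof (cases "t' = 0")
      case True
      then have "t \<in> \<int>" unfolding t'_def by simp
      then have "s \<notin> \<int>" using nint s_def t_def by blast
      then have s'0: "s' \<noteq> 0" unfolding s'_def by (metis Ints_of_int eq_iff_diff_eq_0)
      have "\<not> (v1 = 0 \<and> v2 = 0)"
      proof
        assume "v1 = 0 \<and> v2 = 0"
        then have "s' * of_int a = 0" "s' * of_int b = 0" using v1r v2r True by auto
        then show False using s'0 ab(3) by simp
      qed
      from min1[OF v1b v2b this] have "\<bar>x1\<bar> \<le> \<bar>s'\<bar> * \<bar>x1\<bar>"
        unfolding xv x1_def[symmetric] using True by (simp add: abs_mult)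
      moreover have "\<bar>s'\<bar> * \<bar>x1\<bar> < \<bar>x1\<bar>" using hs x1nz by simp
      ultimately show False by simp
    next
      case False
      have "real_of_int (v1 * b - v2 * a) = - t' * Dr"
        by (simp add: v1r v2r Dr_def Di_def algebra_simps)
      moreover have "- t' * Dr \<noteq> 0" using False Dr0 by simp
      ultimately have "v1 * b - v2 * a \<noteq> 0" by (metis of_int_0)
      from min2[OF v1b v2b this] have "\<bar>x2\<bar> \<le> \<bar>s' * x1 + t' * x2\<bar>"
        unfolding xv x2_def[symmetric] .
      also have "\<dots> \<le> \<bar>s'\<bar> * \<bar>x1\<bar> + \<bar>t'\<bar> * \<bar>x2\<bar>"
        by (metis abs_mult abs_triangle_ineq)
      also have "\<dots> \<le> 1/2 * \<bar>x1\<bar> + 1/2 * \<bar>x2\<bar>"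
        by (intro add_mono mult_right_mono) (use hs ht in auto)
      finally show False using lt by simp
    qed
  qed
  have c10: "(real_of_int 1 * of_int e - of_int 0 * of_int c) / Dr \<in> \<int>
      \<and> (real_of_int a * of_int 0 - of_int b * of_int 1) / Dr \<in> \<int>" by (rule claim)
  have c01: "(real_of_int 0 * of_int e - of_int 1 * of_int c) / Dr \<in> \<int>
      \<and> (real_of_int a * of_int 1 - of_int b * of_int 0) / Dr \<in> \<int>" by (rule claim)
  have i1: "real_of_int e / Dr \<in> \<int>" using c10 by simp
  have i2: "real_of_int (-b) / Dr \<in> \<int>" using c10 by simp
  have i3: "real_of_int (-c) / Dr \<in> \<int>" using c01 by simp
  have i4: "real_of_int a / Dr \<in> \<int>" using c01 by simp
  obtain a' where a': "a = Di * a'" using int_of_div[OF Di0 i4[unfolded Dr_def]] .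
  obtain b' where b': "-b = Di * b'" using int_of_div[OF Di0 i2[unfolded Dr_def]] .
  obtain c' where c': "-c = Di * c'" using int_of_div[OF Di0 i3[unfolded Dr_def]] .
  obtain e' where e': "e = Di * e'" using int_of_div[OF Di0 i1[unfolded Dr_def]] .
  have bb: "b = - (Di * b')" using b' by simp
  have cc: "c = - (Di * c')" using c' by simp
  have "a * e - b * c = (Di * a') * (Di * e') - (- (Di * b')) * (- (Di * c'))"
    by (simp only: a' e' bb cc)
  then have "Di = Di * (Di * (a' * e' - b' * c'))" unfolding Di_def[symmetric] by (simp add: algebra_simps)
  then have "Di * (a' * e' - b' * c') = 1" using Di0 by simp
  then have "Di dvd 1" by (metis dvdI)
  then show ?thesis using Di_def by simp
qed

lemma row1_spec:
  assumes irr: "\<alpha> \<notin> \<rat>" and m: "1 \<le> m"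
  shows "norm_inf (row1 \<alpha> m) \<le> int m \<and> row1 \<alpha> m \<noteq> 0
    \<and> (\<forall>v. norm_inf v \<le> int m \<and> v \<noteq> 0 \<longrightarrow> \<bar>xi \<alpha> (row1 \<alpha> m)\<bar> \<le> \<bar>xi \<alpha> v\<bar>)"
proof -
  have fin: "finite {w. admissible m {} w}"
    by (rule finite_subset[OF _ fin_box[of "int m"]]) (auto simp: adm0)
  have ne: "admissible m {} (mk 1 0)" using m by (simp add: adm0 norm_inf_def vec2_eq)
  have "admissible m {} (choose_row \<alpha> m {}) \<and> normalized (choose_row \<alpha> m {})
    \<and> (\<forall>v. admissible m {} v \<longrightarrow> \<bar>xi \<alpha> (choose_row \<alpha> m {})\<bar> \<le> \<bar>xi \<alpha> v\<bar>)"
    by (rule choose_row_spec[OF irr fin ne]) (auto simp: adm0)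
  then show ?thesis unfolding row1_def adm0 by blast
qed

lemma row2_spec:
  assumes irr: "\<alpha> \<notin> \<rat>" and m: "1 \<le> m"
  shows "norm_inf (row2 \<alpha> m) \<le> int m \<and> (row2 \<alpha> m)$1 * (row1 \<alpha> m)$2 - (row2 \<alpha> m)$2 * (row1 \<alpha> m)$1 \<noteq> 0
    \<and> (\<forall>v. norm_inf v \<le> int m \<and> v$1 * (row1 \<alpha> m)$2 - v$2 * (row1 \<alpha> m)$1 \<noteq> 0
         \<longrightarrow> \<bar>xi \<alpha> (row2 \<alpha> m)\<bar> \<le> \<bar>xi \<alpha> v\<bar>)"
proof -
  define w1 where "w1 = row1 \<alpha> m"
  have w1: "norm_inf w1 \<le> int m" "w1 \<noteq> 0" using row1_spec[OF irr m] w1_def by auto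
  have fin: "finite {w. admissible m {w1} w}"
    by (rule finite_subset[OF _ fin_box[of "int m"]]) (auto simp: adm1[OF w1(2)])
  have "w1$1 \<noteq> 0 \<or> w1$2 \<noteq> 0" using w1(2) by (auto simp: vec2_eq)
  then obtain w0 where ne: "admissible m {w1} w0"
  proof
    assume "w1$1 \<noteq> 0"
    then have "admissible m {w1} (mk 0 1)" using m by (simp add: adm1[OF w1(2)] norm_inf_def)
    then show ?thesis using that by blast
  next
    assume "w1$2 \<noteq> 0"
    then have "admissible m {w1} (mk 1 0)" using m by (simp add: adm1[OF w1(2)] norm_inf_def)
    then show ?thesis using that by blast
  qed
  have neg: "admissible m {w1} (-w)" if "admissible m {w1} w" for w
    using that by (simp add: adm1[OF w1(2)] algebra_simps)
  have nz: "w \<noteq> 0" if "admissible m {w1} w" for w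
    using that by (auto simp: adm1[OF w1(2)])
  have "admissible m {w1} (choose_row \<alpha> m {w1}) \<and> normalized (choose_row \<alpha> m {w1})
    \<and> (\<forall>v. admissible m {w1} v \<longrightarrow> \<bar>xi \<alpha> (choose_row \<alpha> m {w1})\<bar> \<le> \<bar>xi \<alpha> v\<bar>)"
    by (rule choose_row_spec[OF irr fin ne neg nz])
  then show ?thesis unfolding row2_def w1_def[symmetric] adm1[OF w1(2)] by blast
qed

lemma det_A:
  assumes irr: "\<alpha> \<notin> \<rat>" and m: "1 \<le> m"
  shows "\<bar>det (A_mat \<alpha> m)\<bar> = 1"
proof -
  define w1 where "w1 = row1 \<alpha> m"
  define w2 where "w2 = row2 \<alpha> m"
  note r1 = row1_spec[OF irr m, folded w1_def]
  note r2 = row2_spec[OF irr m, folded w1_def w2_def]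
  have det: "det (A_mat \<alpha> m) = w1$1 * w2$2 - w1$2 * w2$1"
    by (simp add: det_2 A_mat_def w1_def w2_def)
  have "\<bar>w1$1 * w2$2 - w1$2 * w2$1\<bar> = 1"
  proof (rule core[OF irr, where m = "int m"])
    show "\<bar>w1$1\<bar> \<le> int m" "\<bar>w1$2\<bar> \<le> int m" using r1 by (auto simp: norm_inf_def)
    show "\<not> (w1$1 = 0 \<and> w1$2 = 0)" using r1 by (auto simp: vec2_eq)
    show "\<bar>w2$1\<bar> \<le> int m" "\<bar>w2$2\<bar> \<le> int m" using r2 by (auto simp: norm_inf_def)
    show "w1$1 * w2$2 - w1$2 * w2$1 \<noteq> 0" using r2 by (auto simp: algebra_simps)
  next
    fix p q :: int
    assume "\<bar>p\<bar> \<le> int m" "\<bar>q\<bar> \<le> int m" "\<not> (p = 0 \<and> q = 0)"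
    then have "norm_inf (mk p q) \<le> int m \<and> mk p q \<noteq> 0" by (auto simp: norm_inf_def vec2_eq)
    then have "\<bar>xi \<alpha> w1\<bar> \<le> \<bar>xi \<alpha> (mk p q)\<bar>" using r1 by blast
    then show "\<bar>of_int (w1$1) * \<alpha> + of_int (w1$2)\<bar> \<le> \<bar>of_int p * \<alpha> + of_int q\<bar>"
      by (simp add: xi_def)
  next
    fix p q :: int
    assume "\<bar>p\<bar> \<le> int m" "\<bar>q\<bar> \<le> int m" "p * w1$2 - q * w1$1 \<noteq> 0"
    then have "norm_inf (mk p q) \<le> int m \<and> (mk p q)$1 * w1$2 - (mk p q)$2 * w1$1 \<noteq> 0"
      by (auto simp: norm_inf_def)
    then have "\<bar>xi \<alpha> w2\<bar> \<le> \<bar>xi \<alpha> (mk p q)\<bar>" using r2 by blast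
    then show "\<bar>of_int (w2$1) * \<alpha> + of_int (w2$2)\<bar> \<le> \<bar>of_int p * \<alpha> + of_int q\<bar>"
      by (simp add: xi_def)
  qed
  then show ?thesis using det by simp
qed

lemma first_occ:
  assumes "1 \<le> m"
  shows "\<exists>j \<in> chain_indices \<alpha>. A_mat \<alpha> j = A_mat \<alpha> m"
proof -
  define P where "P = (\<lambda>j. 1 \<le> j \<and> A_mat \<alpha> j = A_mat \<alpha> m)"
  define j where "j = (LEAST j. P j)"
  have Pm: "P m" using assms P_def by simp
  have Pj: "P j" unfolding j_def by (rule LeastI[of P, OF Pm])
  have "j \<in> chain_indices \<alpha>"
    unfolding chain_indices_def
  proof (intro CollectI conjI allI impI)
    show "1 \<le> j" using Pj P_def by simp
    fix i assume "1 \<le> i \<and> i < j"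
    then show "A_mat \<alpha> i \<noteq> A_mat \<alpha> j"
      using not_less_Least[of i P] Pj P_def j_def by auto
  qed
  then show ?thesis using Pj P_def by blast
qed

lemma chain_inf:
  assumes irr: "\<alpha> \<notin> \<rat>" and a0: "0 < \<alpha>" and a1: "\<alpha> < 1"
  shows "infinite (chain_indices \<alpha>)"
proof
  assume fin: "finite (chain_indices \<alpha>)"
  define R where "R = (\<lambda>j. row1 \<alpha> j) ` chain_indices \<alpha>"
  have finR: "finite R" using fin R_def by simp
  have inR: "row1 \<alpha> m \<in> R" if m1: "1 \<le> m" for m
  proof -
    obtain j where "j \<in> chain_indices \<alpha>" "A_mat \<alpha> j = A_mat \<alpha> m" using first_occ[OF m1] by blast
    then have "A_mat \<alpha> j $ 1 = A_mat \<alpha> m $ 1" by simp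
    then have "row1 \<alpha> j = row1 \<alpha> m" by (simp add: A_mat_def)
    then show ?thesis unfolding R_def by (rule image_eqI[OF sym]) (fact \<open>j \<in> chain_indices \<alpha>\<close>)
  qed
  have Rnz: "w \<noteq> 0" if wR: "w \<in> R" for w
  proof -
    obtain j where j: "j \<in> chain_indices \<alpha>" "w = row1 \<alpha> j" using wR R_def by blast
    then have "1 \<le> j" by (simp add: chain_indices_def)
    then show ?thesis using row1_spec[OF irr \<open>1 \<le> j\<close>] j(2) by simp
  qed
  define c where "c = Min ((\<lambda>w. \<bar>xi \<alpha> w\<bar>) ` R)"
  have "R \<noteq> {}" using inR[of 1] by auto
  then have "c \<in> (\<lambda>w. \<bar>xi \<alpha> w\<bar>) ` R" unfolding c_def using finR by (intro Min_in) auto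
  then obtain w0 where "w0 \<in> R" "c = \<bar>xi \<alpha> w0\<bar>" by blast
  then have cpos: "0 < c" using Rnz xi_nz[OF irr] by simp
  have cle: "c \<le> \<bar>xi \<alpha> w\<bar>" if "w \<in> R" for w
    unfolding c_def using finR that by auto
  obtain N :: nat where N: "N > 0" "inverse (real N) < c"
    using ex_inverse_of_nat_less[OF cpos] by blast
  obtain q p where qp: "0 < q" "q \<le> int (N^1)"
    "\<And>i::nat. i < 1 \<Longrightarrow> \<bar>of_int q * \<alpha> - of_int (p i)\<bar> < 1 / real N"
    using Dirichlet_approx_simult[OF N(1), where \<theta>="\<lambda>_. \<alpha>" and n=1] by blast
  define P where "P = p 0"
  have hP: "\<bar>of_int q * \<alpha> - of_int P\<bar> < 1 / real N" using qp(3)[of 0] P_def by simp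
  have N1: "1 / real N \<le> 1" using N(1) by simp
  have "0 < real_of_int q * \<alpha>" using qp(1) a0 by simp
  moreover have "real_of_int q * \<alpha> < of_int q" using qp(1) a1 by simp
  moreover have "real_of_int q \<le> real N" using qp(2) by simp
  ultimately have "-1 < real_of_int P" "real_of_int P < real N + 1" using hP N1 by linarith+
  then have Pb: "0 \<le> P" "P \<le> int N" by linarith+
  define v where "v = mk q (-P)"
  have vn: "norm_inf v \<le> int N" "v \<noteq> 0" using Pb qp(1,2) by (auto simp: v_def norm_inf_def vec2_eq)
  have "1 \<le> N" using N by simp
  note r = row1_spec[OF irr this]
  have "\<bar>xi \<alpha> (row1 \<alpha> N)\<bar> \<le> \<bar>xi \<alpha> v\<bar>" using r vn by blast
  also have "\<bar>xi \<alpha> v\<bar> < c" using hP N(2) by (simp add: v_def xi_def inverse_eq_divide)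
  finally have "\<bar>xi \<alpha> (row1 \<alpha> N)\<bar> < c" .
  moreover have "c \<le> \<bar>xi \<alpha> (row1 \<alpha> N)\<bar>" using cle inR \<open>1 \<le> N\<close> by blast
  ultimately show False by simp
qed

theorem mainTheorem2:
  fixes \<alpha> :: real and k :: nat
  assumes "0 < \<alpha>" and "\<alpha> < 1" and "\<alpha> \<notin> \<rat>" and "1 \<le> k"
  shows "\<bar>det (minkowski_chain \<alpha> k)\<bar> = 1"
proof -
  have "enumerate (chain_indices \<alpha>) (k - 1) \<in> chain_indices \<alpha>"
    by (rule enumerate_in_set[OF chain_inf[OF assms(3,1,2)]])
  then have "1 \<le> enumerate (chain_indices \<alpha>) (k - 1)" by (simp add: chain_indices_def)
  then show ?thesis unfolding minkowski_chain_def by (rule det_A[OF assms(3)])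
qed

end
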